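(* Let $\mathbbm{k}$ be a field of characteristic $0$, $N \geqslant 2$, and let $f: \mathbb{N} \to \mathbb{Q}$ be any function. Suppose that for every $d \geqslant 0$, the defining ideal $I$ of a general set of $\binom{d+N}{N}$ points in $\mathbb{P}^N_{\mathbbm{k}}$ satisfies $\alpha(I^{(m)})/m \geqslant f(\alpha(I))$ for all $m \in \mathbb{N}$. Then for every $s \geqslant 1$, the defining ideal $I$ of a general set of $s$ points in $\mathbb{P}^N_{\mathbbm{k}}$ satisfies $\alpha(I^{(m)})/m \geqslant f(\alpha(I))$ for all $m \in \mathbb{N}$.
   Context: $\alpha(J)$ is the least degree of a nonzero homogeneous element of a homogeneous ideal $J$. For the ideal $I$ of points with point ideals $\mathfrak{p}_1,\dots,\mathfrak{p}_s$, $I^{(m)} = \bigcap_i \mathfrak{p}_i^m$. A property holds for a general set of $s$ points in $\mathbb{P}^N_{\mathbbm{k}}$ if there is a nonempty Zariski open subset $U$ of the parameter space of $s$ points (e.g. of $\mathbb{A}^{s(N+1)}_{\mathbbm{k}}$, with $\mathbf{a}=(a_{ij})$ giving the points $[a_{i0}:\dots:a_{iN}]$) such that the property holds for every set of points corresponding to a point of $U$. *)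

theory Defs
  imports Complex_Main "HOL-Library.Poly_Mapping"
begin

text \<open>Polynomials over 'k in the variables indexed by 'v (finitely supported
coefficient functions on monomials = finitely supported exponent vectors).\<close>
type_synonym ('v, 'k) mpoly = "('v \<Rightarrow>\<^sub>0 nat) \<Rightarrow>\<^sub>0 'k"

definition is_ideal :: "'r::comm_ring_1 set \<Rightarrow> bool" where
  "is_ideal J \<longleftrightarrow> 0 \<in> J \<and> (\<forall>x\<in>J. \<forall>y\<in>J. x + y \<in> J) \<and> (\<forall>r. \<forall>x\<in>J. r * x \<in> J)"

definition ideal_gen :: "'r::comm_ring_1 set \<Rightarrow> 'r set" where
  "ideal_gen S = \<Inter>{J. is_ideal J \<and> S \<subseteq> J}"

fun ideal_pow :: "'r::comm_ring_1 set \<Rightarrow> nat \<Rightarrow> 'r set" where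
  "ideal_pow I 0 = UNIV"
| "ideal_pow I (Suc m) = ideal_gen {x * y | x y. x \<in> I \<and> y \<in> ideal_pow I m}"

definition mvar :: "'v \<Rightarrow> ('v, 'k::comm_ring_1) mpoly" where
  "mvar j = Poly_Mapping.single (Poly_Mapping.single j 1) 1"

definition mconst :: "'k::comm_ring_1 \<Rightarrow> ('v, 'k) mpoly" where
  "mconst c = Poly_Mapping.single 0 c"

definition point_ideal :: "('v \<Rightarrow> 'k::comm_ring_1) \<Rightarrow> ('v, 'k) mpoly set" where
  "point_ideal a = ideal_gen {mconst (a i) * mvar j - mconst (a j) * mvar i | i j. True}"

definition homogeneous :: "nat \<Rightarrow> ('v, 'k::comm_ring_1) mpoly \<Rightarrow> bool" where
  "homogeneous d p \<longleftrightarrow> (\<forall>m \<in> Poly_Mapping.keys p. (\<Sum>x\<in>Poly_Mapping.keys m. Poly_Mapping.lookup m x) = d)"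

definition alpha :: "('v, 'k::comm_ring_1) mpoly set \<Rightarrow> nat" where
  "alpha J = (LEAST d. \<exists>p\<in>J. p \<noteq> 0 \<and> homogeneous d p)"

definition points_ideal :: "(nat \<Rightarrow> 'v \<Rightarrow> 'k::comm_ring_1) \<Rightarrow> nat \<Rightarrow> ('v, 'k) mpoly set" where
  "points_ideal pts s = (\<Inter>i<s. point_ideal (pts i))"

definition symbolic_power :: "(nat \<Rightarrow> 'v \<Rightarrow> 'k::comm_ring_1) \<Rightarrow> nat \<Rightarrow> nat \<Rightarrow> ('v, 'k) mpoly set" where
  "symbolic_power pts s m = (\<Inter>i<s. ideal_pow (point_ideal (pts i)) m)"

definition mvars :: "('v, 'k::comm_ring_1) mpoly \<Rightarrow> 'v set" where
  "mvars p = \<Union> (Poly_Mapping.keys ` Poly_Mapping.keys p)"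

definition peval :: "('v, 'k::comm_ring_1) mpoly \<Rightarrow> ('v \<Rightarrow> 'k) \<Rightarrow> 'k" where
  "peval p a = (\<Sum>m\<in>Poly_Mapping.keys p. Poly_Mapping.lookup p m * (\<Prod>x\<in>Poly_Mapping.keys m. a x ^ Poly_Mapping.lookup m x))"

text \<open>P holds for a general set of s points: there is a nonempty Zariski open subset U
of the parameter space A^(s(N+1)) (coordinates a i j, i < s, j a variable index),
U = complement of the common zero set of a family S of polynomials in these coordinates,
such that P holds at every parameter in U.\<close>
definition general_points :: "nat \<Rightarrow> ((nat \<Rightarrow> 'v \<Rightarrow> 'k::comm_ring_1) \<Rightarrow> bool) \<Rightarrow> bool" where
  "general_points s P \<longleftrightarrow>
     (\<exists>S :: (nat \<times> 'v, 'k) mpoly set.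
        (\<forall>h\<in>S. mvars h \<subseteq> {..<s} \<times> UNIV) \<and>
        (\<exists>a. \<exists>h\<in>S. peval h (case_prod a) \<noteq> 0) \<and>
        (\<forall>a. (\<exists>h\<in>S. peval h (case_prod a) \<noteq> 0) \<longrightarrow> P a))"

definition waldschmidt_prop :: "(nat \<Rightarrow> rat) \<Rightarrow> (nat \<Rightarrow> 'v \<Rightarrow> 'k::comm_ring_1) \<Rightarrow> nat \<Rightarrow> bool" where
  "waldschmidt_prop f pts s \<longleftrightarrow>
     (\<forall>m\<ge>1. of_nat (alpha (symbolic_power pts s m)) / of_nat m \<ge> f (alpha (points_ideal pts s)))"

end

theory Submission
  imports Defs "HOL-Library.Multiset" "HOL-Computational_Algebra.Polynomial" "Jordan_Normal_Form.Determinant"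
begin

definition monev :: "('w \<Rightarrow>\<^sub>0 nat) \<Rightarrow> ('w \<Rightarrow> 'k::comm_ring_1) \<Rightarrow> 'k" where
  "monev m a = (\<Prod>x\<in>Poly_Mapping.keys m. a x ^ Poly_Mapping.lookup m x)"

lemma mono_superset:
  assumes "finite K" "Poly_Mapping.keys m \<subseteq> K"
  shows "monev m a = (\<Prod>x\<in>K. a x ^ Poly_Mapping.lookup m x)"
  unfolding monev_def
  by (rule prod.mono_neutral_left) (use assms in \<open>auto simp: in_keys_iff\<close>)

lemma mono_add: "monev (m + n) a = monev m a * monev n a"
proof -
  let ?K = "Poly_Mapping.keys m \<union> Poly_Mapping.keys n"
  have "monev (m + n) a = (\<Prod>x\<in>?K. a x ^ Poly_Mapping.lookup (m+n) x)"
    by (rule mono_superset) (auto simp: keys_add)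
  also have "\<dots> = (\<Prod>x\<in>?K. a x ^ Poly_Mapping.lookup m x) * (\<Prod>x\<in>?K. a x ^ Poly_Mapping.lookup n x)"
    by (simp add: lookup_add power_add prod.distrib)
  also have "\<dots> = monev m a * monev n a"
    by (simp add: mono_superset[symmetric])
  finally show ?thesis .
qed

lemma mono_zero[simp]: "monev 0 a = 1"
  by (simp add: monev_def)

lemma peval_superset:
  assumes "finite K" "Poly_Mapping.keys p \<subseteq> K"
  shows "peval p a = (\<Sum>m\<in>K. Poly_Mapping.lookup p m * monev m a)"
  unfolding peval_def monev_def[symmetric]
  by (rule sum.mono_neutral_left) (use assms in \<open>auto simp: in_keys_iff\<close>)

lemma peval_add: "peval (p + q) a = peval p a + peval q a"
proof -
  let ?K = "Poly_Mapping.keys p \<union> Poly_Mapping.keys q"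
  have "peval (p + q) a = (\<Sum>m\<in>?K. Poly_Mapping.lookup (p+q) m * monev m a)"
    by (rule peval_superset) (auto simp: keys_add)
  also have "\<dots> = (\<Sum>m\<in>?K. Poly_Mapping.lookup p m * monev m a) + (\<Sum>m\<in>?K. Poly_Mapping.lookup q m * monev m a)"
    by (simp add: lookup_add distrib_right sum.distrib)
  also have "\<dots> = peval p a + peval q a"
    by (simp add: peval_superset[symmetric])
  finally show ?thesis .
qed

lemma peval_zero[simp]: "peval 0 a = 0"
  by (simp add: peval_def)

lemma peval_sum: "peval (sum f I) a = (\<Sum>i\<in>I. peval (f i) a)"
  by (induction I rule: infinite_finite_induct) (auto simp: peval_add)

lemma peval_single: "peval (Poly_Mapping.single m c) a = c * monev m a"
  by (subst peval_superset[of "{m}"]) auto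

lemma poly_expand: "p = (\<Sum>m\<in>Poly_Mapping.keys p. Poly_Mapping.single m (Poly_Mapping.lookup p m))"
  by (rule poly_mapping_eqI)
     (auto simp: lookup_sum lookup_single when_def in_keys_iff sum.delta' split: if_splits)

lemma peval_mult: "peval (p * q) a = peval p a * peval q a"
proof -
  let ?P = "Poly_Mapping.keys p" and ?Q = "Poly_Mapping.keys q"
  have "p * q = (\<Sum>m\<in>?P. Poly_Mapping.single m (Poly_Mapping.lookup p m)) *
                (\<Sum>n\<in>?Q. Poly_Mapping.single n (Poly_Mapping.lookup q n))"
    by (subst poly_expand[of p], subst poly_expand[of q]) (rule refl)
  also have "\<dots> = (\<Sum>m\<in>?P. \<Sum>n\<in>?Q. Poly_Mapping.single (m + n) (Poly_Mapping.lookup p m * Poly_Mapping.lookup q n))"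
    by (simp add: sum_product mult_single)
  finally have "peval (p*q) a = (\<Sum>m\<in>?P. \<Sum>n\<in>?Q. Poly_Mapping.lookup p m * Poly_Mapping.lookup q n * monev m a * monev n a)"
    by (simp add: peval_sum peval_single mono_add mult_ac)
  also have "\<dots> = peval p a * peval q a"
    by (simp add: peval_def monev_def[symmetric] sum_product mult_ac)
  finally show ?thesis .
qed

lemma peval_one[simp]: "peval 1 a = 1"
  using peval_single[of 0 1 a] by simp

lemma peval_uminus: "peval (- p) a = - peval p a"
  using peval_add[of "-p" p a] by (simp add: eq_neg_iff_add_eq_0)

lemma peval_diff: "peval (p - q) a = peval p a - peval q a"
  using peval_add[of p "-q" a] by (simp add: peval_uminus)

lemma peval_power: "peval (p ^ n) a = peval p a ^ n"
  by (induction n) (auto simp: peval_mult)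

lemma peval_prod: "peval (prod f I) a = (\<Prod>i\<in>I. peval (f i) a)"
  by (induction I rule: infinite_finite_induct) (auto simp: peval_mult)

lemma peval_mconst[simp]: "peval (mconst c) a = c"
  by (simp add: mconst_def peval_single)

lemma mono_single: "monev (Poly_Mapping.single j e) a = a j ^ e"
  by (cases "e = 0") (auto simp: monev_def)

lemma peval_mvar[simp]: "peval (mvar j) a = a j"
  by (simp add: mvar_def peval_single mono_single)

lemma mconst_mult: "mconst c * mconst d = mconst (c * d)"
  by (simp add: mconst_def mult_single)

lemma mconst_one: "mconst 1 = 1"
  by (simp add: mconst_def)

lemma ideal_gen_ideal: "is_ideal (ideal_gen S)"
  unfolding ideal_gen_def is_ideal_def by (auto simp: Inter_iff)

lemma ideal_gen_sub: "S \<subseteq> ideal_gen S"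
  unfolding ideal_gen_def by blast

lemma ideal_gen_least: "is_ideal J \<Longrightarrow> S \<subseteq> J \<Longrightarrow> ideal_gen S \<subseteq> J"
  unfolding ideal_gen_def by blast

lemma ideal_mult: "is_ideal J \<Longrightarrow> x \<in> J \<Longrightarrow> r * x \<in> J"
  unfolding is_ideal_def by blast

lemma ideal_mult2: "is_ideal J \<Longrightarrow> x \<in> J \<Longrightarrow> x * r \<in> J"
  using ideal_mult[of J x r] by (simp add: mult.commute)

lemma ideal_add: "is_ideal J \<Longrightarrow> x \<in> J \<Longrightarrow> y \<in> J \<Longrightarrow> x + y \<in> J"
  unfolding is_ideal_def by blast

lemma ideal_zero: "is_ideal J \<Longrightarrow> 0 \<in> J"
  unfolding is_ideal_def by blast

lemma ideal_uminus: "is_ideal J \<Longrightarrow> x \<in> J \<Longrightarrow> - x \<in> J"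
  using ideal_mult[of J x "-1"] by simp

lemma ideal_diff: "is_ideal J \<Longrightarrow> x \<in> J \<Longrightarrow> y \<in> J \<Longrightarrow> x - y \<in> J"
  using ideal_add[of J x "-y"] ideal_uminus[of J y] by simp

lemma ideal_sum: "is_ideal J \<Longrightarrow> (\<And>i. i \<in> I \<Longrightarrow> f i \<in> J) \<Longrightarrow> sum f I \<in> J"
  by (induction I rule: infinite_finite_induct) (auto simp: ideal_zero ideal_add)

lemma ideal_Inter: "(\<And>i. i \<in> I \<Longrightarrow> is_ideal (F i)) \<Longrightarrow> is_ideal (\<Inter>i\<in>I. F i)"
  unfolding is_ideal_def by simp

lemma ideal_UNIV: "is_ideal UNIV"
  unfolding is_ideal_def by blast

lemma ideal_pow_ideal: "is_ideal (ideal_pow I m)"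
  by (cases m) (auto simp: ideal_UNIV ideal_gen_ideal)

lemma ideal_pow_power: "x \<in> I \<Longrightarrow> x ^ m \<in> ideal_pow I m"
proof (induction m)
  case (Suc m)
  then have "x * x ^ m \<in> {x * y | x y. x \<in> I \<and> y \<in> ideal_pow I m}" by blast
  then show ?case using ideal_gen_sub by force
qed simp

lemma point_ideal_ideal: "is_ideal (point_ideal a)"
  by (simp add: point_ideal_def ideal_gen_ideal)

lemma vanish_ideal: "is_ideal {p. peval p a = 0}"
  unfolding is_ideal_def by (auto simp: peval_add peval_mult)

lemma point_ideal_vanish:
  fixes a :: "'v \<Rightarrow> 'k::comm_ring_1"
  assumes "p \<in> point_ideal a" shows "peval p a = 0"
proof -
  have "point_ideal a \<subseteq> {p. peval p a = 0}"
    unfolding point_ideal_def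
    by (rule ideal_gen_least[OF vanish_ideal]) (auto simp: peval_diff peval_mult mult.commute)
  with assms show ?thesis by blast
qed


definition mdeg :: "('w \<Rightarrow>\<^sub>0 nat) \<Rightarrow> nat" where
  "mdeg m = (\<Sum>x\<in>Poly_Mapping.keys m. Poly_Mapping.lookup m x)"

lemma mdeg_superset:
  assumes "finite K" "Poly_Mapping.keys m \<subseteq> K"
  shows "mdeg m = (\<Sum>x\<in>K. Poly_Mapping.lookup m x)"
  unfolding mdeg_def
  by (rule sum.mono_neutral_left) (use assms in \<open>auto simp: in_keys_iff\<close>)

lemma mdeg_add: "mdeg (m + n) = mdeg m + mdeg n"
proof -
  let ?K = "Poly_Mapping.keys m \<union> Poly_Mapping.keys n"
  have "mdeg (m + n) = (\<Sum>x\<in>?K. Poly_Mapping.lookup (m+n) x)"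
    by (rule mdeg_superset) (auto simp: keys_add)
  also have "\<dots> = (\<Sum>x\<in>?K. Poly_Mapping.lookup m x) + (\<Sum>x\<in>?K. Poly_Mapping.lookup n x)"
    by (simp add: lookup_add sum.distrib)
  also have "\<dots> = mdeg m + mdeg n"
    by (simp add: mdeg_superset[symmetric])
  finally show ?thesis .
qed

lemma mdeg_zero[simp]: "mdeg 0 = 0"
  by (simp add: mdeg_def)

lemma homogeneous_iff: "homogeneous d p \<longleftrightarrow> (\<forall>m\<in>Poly_Mapping.keys p. mdeg m = d)"
  by (simp add: homogeneous_def mdeg_def)

lemma homog_mult:
  assumes "homogeneous d p" "homogeneous e q"
  shows "homogeneous (d + e) (p * q)"
  using assms keys_mult[of p q] unfolding homogeneous_iff by (auto simp: mdeg_add)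

lemma homog_one: "homogeneous 0 1"
  by (simp add: homogeneous_iff)

lemma homog_power:
  assumes "homogeneous d p" shows "homogeneous (n * d) (p ^ n)"
proof (induction n)
  case 0 then show ?case by (simp add: homog_one)
next
  case (Suc n)
  then show ?case using homog_mult[OF assms Suc] by (simp add: add.commute)
qed

lemma homog_single: "homogeneous (mdeg m) (Poly_Mapping.single m c)"
  by (simp add: homogeneous_iff)

lemma homog_sum:
  assumes "\<And>i. i \<in> I \<Longrightarrow> homogeneous d (f i)" shows "homogeneous d (sum f I)"
  using assms keys_sum[of f I] unfolding homogeneous_iff by blast

lemma mvar_power: "(mvar x :: ('v,'k::comm_ring_1) mpoly) ^ e = Poly_Mapping.single (Poly_Mapping.single x e) 1"
proof (induction e)
  case 0 then show ?case by simp
next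
  case (Suc e)
  then show ?case
    by (simp add: mvar_def mult_single single_add[symmetric] mult.commute)
qed

lemma prod_single: "(\<Prod>x\<in>K. Poly_Mapping.single (f x) (1::'k::comm_ring_1)) = Poly_Mapping.single (\<Sum>x\<in>K. f x) 1"
  by (induction K rule: infinite_finite_induct) (auto simp: mult_single)

lemma monomial_prod:
  "(Poly_Mapping.single m 1 :: ('v,'k::comm_ring_1) mpoly) = (\<Prod>x\<in>Poly_Mapping.keys m. mvar x ^ Poly_Mapping.lookup m x)"
  by (simp add: mvar_power prod_single poly_expand[of m, symmetric])

lemma mconst_prod: "mconst (\<Prod>i\<in>I. f i) = (\<Prod>i\<in>I. mconst (f i))"
  by (induction I rule: infinite_finite_induct) (auto simp: mconst_mult[symmetric] mconst_one)

lemma mconst_power: "mconst (c ^ n) = mconst c ^ n"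
  by (induction n) (auto simp: mconst_mult[symmetric] mconst_one)

lemma mconst_sum: "mconst (\<Sum>i\<in>I. f i) = (\<Sum>i\<in>I. mconst (f i))"
  by (induction I rule: infinite_finite_induct) (auto simp: mconst_def single_add)

lemma mconst_single: "mconst c * Poly_Mapping.single m 1 = Poly_Mapping.single m c"
  by (simp add: mconst_def mult_single)

lemma cong_mult:
  assumes J: "is_ideal J" and "u - u' \<in> J" "w - w' \<in> J"
  shows "u * w - u' * w' \<in> J"
proof -
  have "u * w - u' * w' = u * (w - w') + w' * (u - u')" by (simp add: algebra_simps)
  then show ?thesis using assms by (simp add: ideal_add ideal_mult)
qed

lemma cong_prod:
  assumes J: "is_ideal J" and "\<And>i. i \<in> I \<Longrightarrow> f i - g i \<in> J"
  shows "prod f I - prod g I \<in> J"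
  using assms(2)
proof (induction I rule: infinite_finite_induct)
  case (infinite A) then show ?case using ideal_zero[OF J] by simp
next
  case empty then show ?case using ideal_zero[OF J] by simp
next
  case (insert x F) then show ?case by (simp add: cong_mult[OF J])
qed

lemma cong_power:
  assumes J: "is_ideal J" and "u - w \<in> J"
  shows "u ^ n - w ^ n \<in> J"
  using cong_prod[OF J, of "{..<n}" "\<lambda>_. u" "\<lambda>_. w"] assms by simp

lemma monev_scale: "monev m (\<lambda>x. a x * c) = monev m a * c ^ mdeg m"
  by (simp add: monev_def mdeg_def power_mult_distrib prod.distrib power_sum)

lemma point_ideal_member:
  fixes a :: "'v \<Rightarrow> 'k::field"
  assumes ak: "a k \<noteq> 0" and hp: "homogeneous e p" and pa: "peval p a = 0"
  shows "p \<in> point_ideal a"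
proof -
  let ?J = "point_ideal a"
  have J: "is_ideal ?J" by (rule point_ideal_ideal)
  define c where "c = inverse (a k)"
  define b where "b = (\<lambda>x. a x * c)"
  have gen: "mvar x - mconst (b x) * mvar k \<in> ?J" for x
  proof -
    have "mconst (a k) * mvar x - mconst (a x) * mvar k \<in> ?J"
      unfolding point_ideal_def by (rule subsetD[OF ideal_gen_sub]) blast
    then have "mconst c * (mconst (a k) * mvar x - mconst (a x) * mvar k) \<in> ?J"
      by (rule ideal_mult[OF J])
    moreover have "mconst c * (mconst (a k) * mvar x - mconst (a x) * mvar k) = mvar x - mconst (b x) * mvar k"
    proof -
      have "mconst c * (mconst (a k) * mvar x - mconst (a x) * mvar k) = mconst (c * a k) * mvar x - mconst (a x * c) * mvar k"
        by (simp add: right_diff_distrib mconst_mult[symmetric] algebra_simps)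
      also have "\<dots> = mvar x - mconst (b x) * mvar k"
        using ak by (simp add: c_def b_def mconst_one)
      finally show ?thesis .
    qed
    ultimately show ?thesis by simp
  qed
  have mon: "Poly_Mapping.single m 1 - mconst (monev m b) * mvar k ^ mdeg m \<in> ?J" for m
  proof -
    have "mconst (monev m b) * mvar k ^ mdeg m = (\<Prod>x\<in>Poly_Mapping.keys m. (mconst (b x) * mvar k) ^ Poly_Mapping.lookup m x)"
      by (simp add: monev_def mdeg_def mconst_prod mconst_power power_mult_distrib prod.distrib power_sum)
    moreover have "(\<Prod>x\<in>Poly_Mapping.keys m. mvar x ^ Poly_Mapping.lookup m x) - (\<Prod>x\<in>Poly_Mapping.keys m. (mconst (b x) * mvar k) ^ Poly_Mapping.lookup m x) \<in> ?J"
      by (rule cong_prod[OF J], rule cong_power[OF J], rule gen)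
    ultimately show ?thesis by (simp add: monomial_prod[symmetric])
  qed
  have pb: "peval p b = 0"
  proof -
    have "peval p b = (\<Sum>m\<in>Poly_Mapping.keys p. Poly_Mapping.lookup p m * (monev m a * c ^ e))"
      unfolding peval_def monev_def[symmetric] b_def monev_scale
      using hp by (auto simp: homogeneous_iff intro!: sum.cong)
    also have "\<dots> = peval p a * c ^ e"
      by (simp add: peval_def monev_def[symmetric] sum_distrib_right mult.assoc)
    finally show ?thesis using pa by simp
  qed
  let ?K = "Poly_Mapping.keys p"
  let ?c = "Poly_Mapping.lookup p"
  have eq1: "mconst (?c m) * (Poly_Mapping.single m 1 - mconst (monev m b) * mvar k ^ mdeg m)
        = Poly_Mapping.single m (?c m) - mconst (?c m * monev m b) * mvar k ^ e" if "m \<in> ?K" for m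
  proof -
    have "mdeg m = e" using hp that by (simp add: homogeneous_iff)
    then show ?thesis
      by (simp add: right_diff_distrib mconst_single mult.assoc[symmetric] mconst_mult)
  qed
  have eq2: "(\<Sum>m\<in>?K. mconst (?c m * monev m b) * mvar k ^ e) = mconst (peval p b) * mvar k ^ e"
  proof -
    have "(\<Sum>m\<in>?K. mconst (?c m * monev m b) * mvar k ^ e) = (\<Sum>m\<in>?K. mconst (?c m * monev m b)) * mvar k ^ e"
      by (rule sum_distrib_right[symmetric])
    also have "(\<Sum>m\<in>?K. mconst (?c m * monev m b)) = mconst (\<Sum>m\<in>?K. ?c m * monev m b)"
      by (rule mconst_sum[symmetric])
    also have "(\<Sum>m\<in>?K. ?c m * monev m b) = peval p b"
      by (simp add: peval_def monev_def)
    finally show ?thesis .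
  qed
  have eq3: "(\<Sum>m\<in>?K. Poly_Mapping.single m (?c m)) = p"
    by (rule poly_expand[symmetric])
  have "(\<Sum>m\<in>?K. mconst (?c m) * (Poly_Mapping.single m 1 - mconst (monev m b) * mvar k ^ mdeg m))
      = (\<Sum>m\<in>?K. Poly_Mapping.single m (?c m) - mconst (?c m * monev m b) * mvar k ^ e)"
    by (rule sum.cong[OF refl], rule eq1)
  also have "\<dots> = p - mconst (peval p b) * mvar k ^ e"
    by (simp only: sum_subtractf eq2 eq3)
  also have "\<dots> = p" using pb by (simp add: mconst_def)
  finally have "p = (\<Sum>m\<in>?K. mconst (?c m) * (Poly_Mapping.single m 1 - mconst (monev m b) * mvar k ^ mdeg m))" by simp
  also have "\<dots> \<in> ?J"
    by (rule ideal_sum[OF J], rule ideal_mult[OF J], rule mon)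
  finally show ?thesis .
qed


lemma exists_nonroot:
  fixes P :: "'k::field_char_0 poly"
  assumes "P \<noteq> 0" shows "\<exists>t. poly P t \<noteq> 0"
proof -
  have "finite {t. poly P t = 0}" by (rule poly_roots_finite[OF assms])
  then have "UNIV - {t. poly P t = 0} \<noteq> {}"
    using infinite_UNIV_char_0[where 'a='k] by (metis Diff_infinite_finite finite.emptyI)
  then show ?thesis by blast
qed

lemma nonvanish_gen:
  fixes c :: "('w \<Rightarrow>\<^sub>0 nat) \<Rightarrow> 'k::field_char_0"
  assumes "finite V" "finite C"
    "\<forall>\<nu>\<in>C. \<forall>\<mu>\<in>C. (\<forall>w\<in>V. Poly_Mapping.lookup \<nu> w = Poly_Mapping.lookup \<mu> w) \<longrightarrow> \<nu> = \<mu>"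
    "\<nu>0 \<in> C" "c \<nu>0 \<noteq> 0"
  shows "\<exists>x. (\<Sum>\<nu>\<in>C. c \<nu> * (\<Prod>w\<in>V. x w ^ Poly_Mapping.lookup \<nu> w)) \<noteq> 0"
  using assms
proof (induction V arbitrary: C \<nu>0 rule: finite_induct)
  case empty
  then have "C = {\<nu>0}" by auto
  then show ?case using empty by simp
next
  case (insert v V)
  let ?lv = "\<lambda>\<nu>. Poly_Mapping.lookup \<nu> v"
  define j0 where "j0 = ?lv \<nu>0"
  define C0 where "C0 = {\<nu>\<in>C. ?lv \<nu> = j0}"
  have "\<exists>x. (\<Sum>\<nu>\<in>C0. c \<nu> * (\<Prod>w\<in>V. x w ^ Poly_Mapping.lookup \<nu> w)) \<noteq> 0"
  proof (rule insert.IH)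
    show "finite C0" using insert.prems(1) by (simp add: C0_def)
    show "\<forall>\<nu>\<in>C0. \<forall>\<mu>\<in>C0. (\<forall>w\<in>V. Poly_Mapping.lookup \<nu> w = Poly_Mapping.lookup \<mu> w) \<longrightarrow> \<nu> = \<mu>"
      using insert.prems(2) by (auto simp: C0_def)
    show "\<nu>0 \<in> C0" using insert.prems(3) by (simp add: C0_def j0_def)
    show "c \<nu>0 \<noteq> 0" by (rule insert.prems(4))
  qed
  then obtain x' where x': "(\<Sum>\<nu>\<in>C0. c \<nu> * (\<Prod>w\<in>V. x' w ^ Poly_Mapping.lookup \<nu> w)) \<noteq> 0" by blast
  define g where "g j = (\<Sum>\<nu>\<in>{\<nu>\<in>C. ?lv \<nu> = j}. c \<nu> * (\<Prod>w\<in>V. x' w ^ Poly_Mapping.lookup \<nu> w))" for j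
  define J where "J = ?lv ` C"
  have finJ: "finite J" using insert.prems(1) by (simp add: J_def)
  have j0J: "j0 \<in> J" using insert.prems(3) by (simp add: J_def j0_def)
  define P where "P = (\<Sum>j\<in>J. monom (g j) j)"
  have "coeff P j0 = g j0"
    unfolding P_def coeff_sum coeff_monom using finJ j0J by (simp add: sum.delta)
  then have "coeff P j0 \<noteq> 0" using x' by (simp add: g_def C0_def)
  then have "P \<noteq> 0" by auto
  then obtain t where t: "poly P t \<noteq> 0" using exists_nonroot by blast
  define x where "x = x'(v := t)"
  have "(\<Sum>\<nu>\<in>C. c \<nu> * (\<Prod>w\<in>insert v V. x w ^ Poly_Mapping.lookup \<nu> w))
      = (\<Sum>\<nu>\<in>C. t ^ ?lv \<nu> * (c \<nu> * (\<Prod>w\<in>V. x' w ^ Poly_Mapping.lookup \<nu> w)))"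
  proof (rule sum.cong[OF refl])
    fix \<nu> assume "\<nu> \<in> C"
    have "(\<Prod>w\<in>V. x w ^ Poly_Mapping.lookup \<nu> w) = (\<Prod>w\<in>V. x' w ^ Poly_Mapping.lookup \<nu> w)"
      using insert.hyps(2) by (auto simp: x_def intro!: prod.cong)
    then show "c \<nu> * (\<Prod>w\<in>insert v V. x w ^ Poly_Mapping.lookup \<nu> w) = t ^ ?lv \<nu> * (c \<nu> * (\<Prod>w\<in>V. x' w ^ Poly_Mapping.lookup \<nu> w))"
      using insert.hyps by (simp add: x_def)
  qed
  also have "\<dots> = (\<Sum>j\<in>J. \<Sum>\<nu>\<in>{\<nu>\<in>C. ?lv \<nu> = j}. t ^ ?lv \<nu> * (c \<nu> * (\<Prod>w\<in>V. x' w ^ Poly_Mapping.lookup \<nu> w)))"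
    by (rule sum.group[symmetric]) (use insert.prems(1) finJ in \<open>auto simp: J_def\<close>)
  also have "\<dots> = (\<Sum>j\<in>J. t ^ j * g j)"
    unfolding g_def sum_distrib_left by (rule sum.cong[OF refl], rule sum.cong) auto
  also have "\<dots> = poly P t"
    by (simp add: P_def poly_sum poly_monom mult.commute)
  finally have "(\<Sum>\<nu>\<in>C. c \<nu> * (\<Prod>w\<in>insert v V. x w ^ Poly_Mapping.lookup \<nu> w)) \<noteq> 0"
    using t by simp
  then show ?case by blast
qed

lemma finite_mvars: "finite (mvars p)"
  by (simp add: mvars_def)

lemma peval_nonzero_exists:
  fixes p :: "('w, 'k::field_char_0) mpoly"
  assumes "p \<noteq> 0" shows "\<exists>x. peval p x \<noteq> 0"
proof -
  let ?V = "mvars p"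
  obtain m0 where m0: "m0 \<in> Poly_Mapping.keys p" using assms by (metis all_not_in_conv keys_eq_empty)
  have sub: "Poly_Mapping.keys m \<subseteq> ?V" if "m \<in> Poly_Mapping.keys p" for m
    using that by (auto simp: mvars_def)
  have "\<exists>x. (\<Sum>\<nu>\<in>Poly_Mapping.keys p. Poly_Mapping.lookup p \<nu> * (\<Prod>w\<in>?V. x w ^ Poly_Mapping.lookup \<nu> w)) \<noteq> 0"
  proof (rule nonvanish_gen[OF finite_mvars finite_keys _ m0])
    show "Poly_Mapping.lookup p m0 \<noteq> 0" using m0 by (simp add: in_keys_iff)
    show "\<forall>\<nu>\<in>Poly_Mapping.keys p. \<forall>\<mu>\<in>Poly_Mapping.keys p. (\<forall>w\<in>?V. Poly_Mapping.lookup \<nu> w = Poly_Mapping.lookup \<mu> w) \<longrightarrow> \<nu> = \<mu>"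
    proof (intro ballI impI poly_mapping_eqI)
      fix \<nu> \<mu> w assume h: "\<nu> \<in> Poly_Mapping.keys p" "\<mu> \<in> Poly_Mapping.keys p"
        "\<forall>w\<in>?V. Poly_Mapping.lookup \<nu> w = Poly_Mapping.lookup \<mu> w"
      show "Poly_Mapping.lookup \<nu> w = Poly_Mapping.lookup \<mu> w"
      proof (cases "w \<in> ?V")
        case True then show ?thesis using h by blast
      next
        case False
        then have "w \<notin> Poly_Mapping.keys \<nu>" "w \<notin> Poly_Mapping.keys \<mu>" using sub h by blast+
        then show ?thesis by (simp add: in_keys_iff)
      qed
    qed
  qed
  then obtain x where "(\<Sum>\<nu>\<in>Poly_Mapping.keys p. Poly_Mapping.lookup p \<nu> * (\<Prod>w\<in>?V. x w ^ Poly_Mapping.lookup \<nu> w)) \<noteq> 0" by blast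
  moreover have "peval p x = (\<Sum>\<nu>\<in>Poly_Mapping.keys p. Poly_Mapping.lookup p \<nu> * (\<Prod>w\<in>?V. x w ^ Poly_Mapping.lookup \<nu> w))"
    unfolding peval_def by (rule sum.cong[OF refl]) (simp add: monev_def[symmetric] mono_superset[OF finite_mvars sub])
  ultimately have "peval p x \<noteq> 0" by simp
  then show ?thesis by blast
qed

definition linepoly :: "('w, 'k::comm_ring_1) mpoly \<Rightarrow> ('w \<Rightarrow> 'k) \<Rightarrow> ('w \<Rightarrow> 'k) \<Rightarrow> 'k poly" where
  "linepoly p x0 x1 = (\<Sum>m\<in>Poly_Mapping.keys p. [:Poly_Mapping.lookup p m:] *
      (\<Prod>w\<in>Poly_Mapping.keys m. [:x0 w, x1 w - x0 w:] ^ Poly_Mapping.lookup m w))"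

lemma poly_linepoly: "poly (linepoly p x0 x1) t = peval p (\<lambda>w. x0 w + t * (x1 w - x0 w))"
  by (simp add: linepoly_def peval_def poly_sum poly_prod poly_power)

lemma two_nonzero:
  fixes p q :: "('w, 'k::field_char_0) mpoly"
  assumes "peval p x0 \<noteq> 0" "peval q x1 \<noteq> 0"
  shows "\<exists>x. peval p x \<noteq> 0 \<and> peval q x \<noteq> 0"
proof -
  have "poly (linepoly p x0 x1) 0 \<noteq> 0" using assms(1) by (simp add: poly_linepoly)
  then have 1: "linepoly p x0 x1 \<noteq> 0" by auto
  have "poly (linepoly q x0 x1) 1 \<noteq> 0" using assms(2) by (simp add: poly_linepoly)
  then have 2: "linepoly q x0 x1 \<noteq> 0" by auto
  obtain t where "poly (linepoly p x0 x1 * linepoly q x0 x1) t \<noteq> 0"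
    using exists_nonroot[of "linepoly p x0 x1 * linepoly q x0 x1"] 1 2 by auto
  then show ?thesis by (auto simp: poly_linepoly)
qed


definition Mon :: "nat \<Rightarrow> ('v::finite \<Rightarrow>\<^sub>0 nat) set" where
  "Mon e = {m. mdeg m = e}"

lemma Mon_eq_image:
  "Mon e = (\<lambda>M. Abs_poly_mapping (count M)) ` multisets_of_size (UNIV :: 'v::finite set) e"
proof -
  have lk: "Poly_Mapping.lookup (Abs_poly_mapping (count M)) = count M" for M :: "'v multiset"
    by (simp add: lookup_Abs_poly_mapping)
  have "mdeg (Abs_poly_mapping (count M)) = size M" for M :: "'v multiset"
  proof -
    have "mdeg (Abs_poly_mapping (count M)) = (\<Sum>x\<in>UNIV. Poly_Mapping.lookup (Abs_poly_mapping (count M)) x)"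
      by (rule mdeg_superset) auto
    then have "mdeg (Abs_poly_mapping (count M)) = (\<Sum>x\<in>UNIV. count M x)"
      by (simp only: lk)
    also have "\<dots> = (\<Sum>x\<in>set_mset M. count M x)"
      by (rule sum.mono_neutral_right) (auto simp: count_eq_zero_iff)
    finally show ?thesis by (simp add: size_multiset_overloaded_eq)
  qed
  moreover have "m \<in> (\<lambda>M. Abs_poly_mapping (count M)) ` {M. size M = mdeg m}" for m :: "'v \<Rightarrow>\<^sub>0 nat"
  proof -
    define M where "M = Abs_multiset (Poly_Mapping.lookup m)"
    have cM: "count M = Poly_Mapping.lookup m"
      unfolding M_def by (rule count_Abs_multiset) simp
    have "size M = (\<Sum>x\<in>set_mset M. count M x)" by (simp add: size_multiset_overloaded_eq)
    also have "\<dots> = (\<Sum>x\<in>UNIV. count M x)" by (rule sum.mono_neutral_left) (auto simp: count_eq_zero_iff)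
    also have "\<dots> = mdeg m" unfolding cM by (rule mdeg_superset[symmetric]) auto
    finally have "size M = mdeg m" .
    moreover have "m = Abs_poly_mapping (count M)" by (simp add: cM)
    ultimately show ?thesis by blast
  qed
  ultimately show ?thesis
    unfolding Mon_def multisets_of_size_def by auto
qed

lemma finite_Mon: "finite (Mon e :: ('v::finite \<Rightarrow>\<^sub>0 nat) set)"
  by (simp add: Mon_eq_image finite_multisets_of_size)

lemma card_Mon: "card (Mon e :: ('v::finite \<Rightarrow>\<^sub>0 nat) set) = (card (UNIV :: 'v set) + e - 1) choose e"
proof -
  have "inj_on (\<lambda>M. Abs_poly_mapping (count M)) (multisets_of_size (UNIV :: 'v set) e)"
  proof (rule inj_onI)
    fix M M' :: "'v multiset" assume "Abs_poly_mapping (count M) = Abs_poly_mapping (count M')"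
    then have "Poly_Mapping.lookup (Abs_poly_mapping (count M)) = Poly_Mapping.lookup (Abs_poly_mapping (count M'))" by simp
    then have "count M = count M'" by (simp add: lookup_Abs_poly_mapping)
    then show "M = M'" by (simp add: multiset_eqI)
  qed
  then show ?thesis
    by (simp add: Mon_eq_image card_image card_multisets_of_size)
qed

lemma card_Mon': 
  assumes "card (UNIV :: 'v::finite set) \<ge> 1"
  shows "card (Mon e :: ('v \<Rightarrow>\<^sub>0 nat) set) = (e + (card (UNIV :: 'v set) - 1)) choose (card (UNIV :: 'v set) - 1)"
proof -
  let ?n = "card (UNIV :: 'v set)"
  have "(e + (?n - 1)) choose (?n - 1) = (e + (?n - 1)) choose (e + (?n - 1) - (?n - 1))"
    by (rule binomial_symmetric) simp
  also have "\<dots> = (?n + e - 1) choose e" using assms by (simp add: add.commute)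
  finally show ?thesis by (simp add: card_Mon)
qed

lemma homog_keys_Mon: "homogeneous e p \<Longrightarrow> Poly_Mapping.keys p \<subseteq> Mon e"
  by (auto simp: homogeneous_iff Mon_def)


definition evmat :: "nat \<Rightarrow> (nat \<Rightarrow> ('v \<Rightarrow>\<^sub>0 nat)) \<Rightarrow> (nat \<Rightarrow> 'v \<Rightarrow> 'k::comm_ring_1) \<Rightarrow> 'k mat" where
  "evmat n mo a = mat n n (\<lambda>(i,j). monev (mo j) (a i))"

definition nu :: "nat \<Rightarrow> (nat \<Rightarrow> ('v::finite \<Rightarrow>\<^sub>0 nat)) \<Rightarrow> (nat \<Rightarrow> nat) \<Rightarrow> (nat \<times> 'v) \<Rightarrow>\<^sub>0 nat" where
  "nu n mo \<sigma> = Abs_poly_mapping (\<lambda>(i,v). if i < n then Poly_Mapping.lookup (mo (\<sigma> i)) v else 0)"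

lemma lookup_nu: "Poly_Mapping.lookup (nu n mo \<sigma>) = (\<lambda>(i,v). if i < n then Poly_Mapping.lookup (mo (\<sigma> i)) v else 0)"
proof -
  have "{x. (case x of (i,v) \<Rightarrow> if i < n then Poly_Mapping.lookup (mo (\<sigma> i)) v else 0) \<noteq> 0} \<subseteq> {..<n} \<times> UNIV"
    by (auto split: if_splits)
  then have "finite {x. (case x of (i,v) \<Rightarrow> if i < n then Poly_Mapping.lookup (mo (\<sigma> i)) v else 0) \<noteq> 0}"
    by (rule finite_subset) auto
  then show ?thesis unfolding nu_def by (simp add: lookup_Abs_poly_mapping)
qed

lemma keys_nu: "Poly_Mapping.keys (nu n mo \<sigma>) \<subseteq> {0..<n} \<times> UNIV"
  by (auto simp: in_keys_iff lookup_nu split: if_splits)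

definition Dpoly :: "nat \<Rightarrow> (nat \<Rightarrow> ('v::finite \<Rightarrow>\<^sub>0 nat)) \<Rightarrow> (nat \<times> 'v, 'k::comm_ring_1) mpoly" where
  "Dpoly n mo = (\<Sum>\<sigma>\<in>{\<sigma>. \<sigma> permutes {0..<n}}. Poly_Mapping.single (nu n mo \<sigma>) (signof \<sigma>))"

lemma monev_nu:
  fixes a :: "nat \<Rightarrow> 'v::finite \<Rightarrow> 'k::comm_ring_1"
  shows "monev (nu n mo \<sigma>) (case_prod a) = (\<Prod>i\<in>{0..<n}. monev (mo (\<sigma> i)) (a i))"
proof -
  have "monev (nu n mo \<sigma>) (case_prod a) = (\<Prod>x\<in>{0..<n} \<times> UNIV. case_prod a x ^ Poly_Mapping.lookup (nu n mo \<sigma>) x)"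
    by (rule mono_superset[OF _ keys_nu]) simp
  also have "\<dots> = (\<Prod>(i,v)\<in>{0..<n} \<times> UNIV. a i v ^ Poly_Mapping.lookup (mo (\<sigma> i)) v)"
    by (rule prod.cong[OF refl]) (auto simp: lookup_nu)
  also have "\<dots> = (\<Prod>i\<in>{0..<n}. \<Prod>v\<in>UNIV. a i v ^ Poly_Mapping.lookup (mo (\<sigma> i)) v)"
    by (rule prod.cartesian_product[symmetric])
  also have "\<dots> = (\<Prod>i\<in>{0..<n}. monev (mo (\<sigma> i)) (a i))"
    by (rule prod.cong[OF refl], rule mono_superset[symmetric]) auto
  finally show ?thesis .
qed

lemma peval_Dpoly:
  fixes a :: "nat \<Rightarrow> 'v::finite \<Rightarrow> 'k::comm_ring_1"
  shows "peval (Dpoly n mo) (case_prod a) = det (evmat n mo a)"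
proof -
  have "peval (Dpoly n mo) (case_prod a) = (\<Sum>\<sigma>\<in>{\<sigma>. \<sigma> permutes {0..<n}}. signof \<sigma> * (\<Prod>i\<in>{0..<n}. monev (mo (\<sigma> i)) (a i)))"
    by (simp add: Dpoly_def peval_sum peval_single monev_nu)
  also have "\<dots> = (\<Sum>\<sigma>\<in>{\<sigma>. \<sigma> permutes {0..<n}}. signof \<sigma> * (\<Prod>i\<in>{0..<n}. evmat n mo a $$ (i, \<sigma> i)))"
  proof (rule sum.cong[OF refl])
    fix \<sigma> assume "\<sigma> \<in> {\<sigma>. \<sigma> permutes {0..<n}}"
    then have "\<sigma> i < n" if "i < n" for i using permutes_in_image[of \<sigma> "{0..<n}" i] that by auto
    then show "signof \<sigma> * (\<Prod>i\<in>{0..<n}. monev (mo (\<sigma> i)) (a i)) = signof \<sigma> * (\<Prod>i\<in>{0..<n}. evmat n mo a $$ (i, \<sigma> i))"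
      by (auto simp: evmat_def intro!: prod.cong)
  qed
  also have "\<dots> = det (evmat n mo a)"
    by (rule det_def'[symmetric]) (simp add: evmat_def)
  finally show ?thesis .
qed

lemma mvars_Dpoly: "mvars (Dpoly n mo :: (nat \<times> 'v::finite, 'k::comm_ring_1) mpoly) \<subseteq> {..<n} \<times> UNIV"
proof -
  have "Poly_Mapping.keys (Dpoly n mo :: (nat \<times> 'v, 'k) mpoly) \<subseteq> (\<Union>\<sigma>\<in>{\<sigma>. \<sigma> permutes {0..<n}}. Poly_Mapping.keys (Poly_Mapping.single (nu n mo \<sigma>) (signof \<sigma> :: 'k)))"
    unfolding Dpoly_def by (rule keys_sum)
  also have "\<dots> \<subseteq> (\<Union>\<sigma>\<in>{\<sigma>. \<sigma> permutes {0..<n}}. {nu n mo \<sigma>})" by auto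
  finally have "Poly_Mapping.keys (Dpoly n mo :: (nat \<times> 'v, 'k) mpoly) \<subseteq> (\<Union>\<sigma>\<in>{\<sigma>. \<sigma> permutes {0..<n}}. {nu n mo \<sigma>})" .
  then show ?thesis using keys_nu unfolding mvars_def by fastforce
qed

lemma nu_inj:
  assumes inj: "inj_on mo {0..<n}" and s: "\<sigma> permutes {0..<n}" and t: "\<tau> permutes {0..<n}"
    and eq: "nu n mo \<sigma> = nu n mo \<tau>"
  shows "\<sigma> = \<tau>"
proof
  fix i show "\<sigma> i = \<tau> i"
  proof (cases "i < n")
    case True
    have "Poly_Mapping.lookup (nu n mo \<sigma>) (i, v) = Poly_Mapping.lookup (nu n mo \<tau>) (i, v)" for v
      using eq by simp
    then have "Poly_Mapping.lookup (mo (\<sigma> i)) v = Poly_Mapping.lookup (mo (\<tau> i)) v" for v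
      using True by (simp add: lookup_nu)
    then have "mo (\<sigma> i) = mo (\<tau> i)" by (simp add: poly_mapping_eqI)
    moreover have "\<sigma> i \<in> {0..<n}" "\<tau> i \<in> {0..<n}"
      using permutes_in_image[OF s] permutes_in_image[OF t] True by auto
    ultimately show ?thesis using inj by (simp add: inj_on_def)
  next
    case False
    then show ?thesis using permutes_not_in[OF s] permutes_not_in[OF t] by simp
  qed
qed

lemma Dpoly_nonzero:
  assumes inj: "inj_on mo {0..<n}"
  shows "(Dpoly n mo :: (nat \<times> 'v::finite, 'k::comm_ring_1) mpoly) \<noteq> 0"
proof -
  let ?P = "{\<sigma>. \<sigma> permutes {0..<n}}"
  have "Poly_Mapping.lookup (Dpoly n mo :: (nat \<times> 'v, 'k) mpoly) (nu n mo id)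
      = (\<Sum>\<sigma>\<in>?P. if \<sigma> = id then 1 else 0)"
    unfolding Dpoly_def lookup_sum
  proof (rule sum.cong[OF refl])
    fix \<sigma> assume "\<sigma> \<in> ?P"
    then show "Poly_Mapping.lookup (Poly_Mapping.single (nu n mo \<sigma>) (signof \<sigma>)) (nu n mo id) = (if \<sigma> = id then (1::'k) else 0)"
      using nu_inj[OF inj, of \<sigma> id] permutes_id[of "{0..<n}"]
      by (auto simp: lookup_single when_def signof_id)
  qed
  also have "\<dots> = 1" using permutes_id[of "{0..<n}"] finite_permutations[of "{0..<n}"] by (simp add: sum.delta)
  finally show ?thesis by auto
qed

lemma exists_good_points:
  assumes inj: "inj_on mo {0..<n}"
  shows "\<exists>a :: nat \<Rightarrow> 'v::finite \<Rightarrow> 'k::field_char_0. det (evmat n mo a) \<noteq> 0"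
proof -
  obtain x :: "nat \<times> 'v \<Rightarrow> 'k" where "peval (Dpoly n mo) x \<noteq> 0"
    using peval_nonzero_exists[OF Dpoly_nonzero[OF inj]] by blast
  moreover have "x = case_prod (\<lambda>i v. x (i, v))" by simp
  ultimately have "det (evmat n mo (\<lambda>i v. x (i, v))) \<noteq> 0"
    by (metis peval_Dpoly)
  then show ?thesis by blast
qed

lemma evmat_mult:
  assumes bij: "bij_betw mo {0..<n} (Mon d)" and i: "i < n" and hq: "homogeneous d q"
  shows "(evmat n mo a *\<^sub>v vec n (\<lambda>j. Poly_Mapping.lookup q (mo j))) $ i = peval q (a i)"
proof -
  have "(evmat n mo a *\<^sub>v vec n (\<lambda>j. Poly_Mapping.lookup q (mo j))) $ i
      = (\<Sum>j\<in>{0..<n}. monev (mo j) (a i) * Poly_Mapping.lookup q (mo j))"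
    using i by (simp add: evmat_def scalar_prod_def)
  also have "\<dots> = (\<Sum>j\<in>{0..<n}. Poly_Mapping.lookup q (mo j) * monev (mo j) (a i))"
    by (simp add: mult.commute)
  also have "\<dots> = (\<Sum>m\<in>Mon d. Poly_Mapping.lookup q m * monev m (a i))"
    by (rule sum.reindex_bij_betw[OF bij])
  also have "\<dots> = peval q (a i)"
    by (rule peval_superset[symmetric, OF finite_Mon homog_keys_Mon[OF hq]])
  finally show ?thesis .
qed

lemma kernel_trivial:
  fixes a :: "nat \<Rightarrow> 'v::finite \<Rightarrow> 'k::field"
  assumes bij: "bij_betw mo {0..<n} (Mon d)" and det: "det (evmat n mo a) \<noteq> 0"
    and hq: "homogeneous d q" and van: "\<forall>i<n. peval q (a i) = 0"
  shows "q = 0"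
proof -
  let ?v = "vec n (\<lambda>j. Poly_Mapping.lookup q (mo j))"
  have z: "(evmat n mo a *\<^sub>v ?v) $ i = 0" if "i < n" for i
    using evmat_mult[OF bij that hq] van that by simp
  have "evmat n mo a *\<^sub>v ?v = 0\<^sub>v n"
    by (rule eq_vecI) (simp add: z, simp add: evmat_def)
  moreover have "evmat n mo a \<in> carrier_mat n n" by (simp add: evmat_def)
  moreover have "?v \<in> carrier_vec n" by simp
  ultimately have "?v = 0\<^sub>v n"
    using det det_0_iff_vec_prod_zero_field[of "evmat n mo a" n] by blast
  then have z: "Poly_Mapping.lookup q (mo j) = 0" if "j < n" for j
    using that by (metis index_vec index_zero_vec(1))
  have "Poly_Mapping.keys q = {}"
  proof (rule ccontr)
    assume "Poly_Mapping.keys q \<noteq> {}"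
    then obtain m where m: "m \<in> Poly_Mapping.keys q" by blast
    then have "m \<in> Mon d" using homog_keys_Mon[OF hq] by blast
    then have "m \<in> mo ` {0..<n}" using bij by (simp add: bij_betw_def)
    then obtain j where "j < n" "m = mo j" by auto
    then show False using z m by (simp add: in_keys_iff)
  qed
  then show ?thesis by simp
qed

lemma kernel_nontrivial:
  fixes a :: "nat \<Rightarrow> 'v::finite \<Rightarrow> 'k::field" and mo :: "nat \<Rightarrow> ('v \<Rightarrow>\<^sub>0 nat)"
  assumes bij: "bij_betw mo {0..<n} (Mon d)" and sn: "s < n"
  shows "\<exists>q. q \<noteq> 0 \<and> homogeneous d q \<and> (\<forall>i<s. peval q (a i) = 0)"
proof -
  define A where "A = mat n n (\<lambda>(i,j). if i < s then monev (mo j) (a i) else (0::'k))"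
  have A: "A \<in> carrier_mat n n" by (simp add: A_def)
  have "det A = 0"
  proof -
    have pz: "(\<Prod>i = 0..<n. A $$ (i, \<sigma> i)) = 0" if "\<sigma> permutes {0..<n}" for \<sigma>
    proof (rule prod_zero)
      have "\<sigma> (n - 1) < n" using permutes_in_image[OF that, of "n - 1"] sn by auto
      then show "\<exists>i\<in>{0..<n}. A $$ (i, \<sigma> i) = 0" using sn by (intro bexI[of _ "n - 1"]) (auto simp: A_def)
    qed simp
    show ?thesis unfolding det_def'[OF A]
    proof (rule sum.neutral, rule ballI)
      fix \<sigma> assume "\<sigma> \<in> {\<sigma>. \<sigma> permutes {0..<n}}"
      then have "(\<Prod>i = 0..<n. A $$ (i, \<sigma> i)) = 0" using pz by blast
      then show "signof \<sigma> * (\<Prod>i = 0..<n. A $$ (i, \<sigma> i)) = 0" by simp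
    qed
  qed
  then obtain v where v: "v \<in> carrier_vec n" "v \<noteq> 0\<^sub>v n" "A *\<^sub>v v = 0\<^sub>v n"
    using det_0_iff_vec_prod_zero_field[OF A] by blast
  define q where "q = (\<Sum>j\<in>{0..<n}. Poly_Mapping.single (mo j) (v $ j))"
  have inj: "inj_on mo {0..<n}" using bij by (simp add: bij_betw_def)
  have lq: "Poly_Mapping.lookup q (mo j) = v $ j" if "j < n" for j
  proof -
    have "Poly_Mapping.lookup q (mo j) = (\<Sum>j'\<in>{0..<n}. if j' = j then v $ j' else 0)"
      unfolding q_def lookup_sum
      by (rule sum.cong[OF refl]) (use inj that in \<open>auto simp: lookup_single when_def inj_on_def\<close>)
    also have "\<dots> = v $ j" using that by (simp add: sum.delta')
    finally show ?thesis .
  qed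
  obtain j where j: "j < n" "v $ j \<noteq> 0" using v(1,2) by (metis carrier_vecD eq_vecI index_zero_vec)
  have "q \<noteq> 0" using lq[OF j(1)] j(2) by auto
  moreover have "homogeneous d q"
    unfolding q_def
  proof (rule homog_sum)
    fix j assume "j \<in> {0..<n}"
    then have "mo j \<in> Mon d" using bij by (auto simp: bij_betw_def)
    then have "mdeg (mo j) = d" by (simp add: Mon_def)
    then show "homogeneous d (Poly_Mapping.single (mo j) (v $ j))" using homog_single[of "mo j"] by simp
  qed
  moreover have "peval q (a i) = 0" if "i < s" for i
  proof -
    have "peval q (a i) = (\<Sum>j\<in>{0..<n}. v $ j * monev (mo j) (a i))"
      by (simp add: q_def peval_sum peval_single)
    also have "\<dots> = (A *\<^sub>v v) $ i"
      using that sn v(1) by (simp add: A_def scalar_prod_def mult.commute)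
    also have "\<dots> = 0" using v(3) that sn by simp
    finally show ?thesis .
  qed
  ultimately show ?thesis by blast
qed


lemma mvars_add: "mvars (p + q) \<subseteq> mvars p \<union> mvars q"
  unfolding mvars_def using keys_add[of p q] by blast

lemma mvars_mult: "mvars (p * q) \<subseteq> mvars p \<union> mvars q"
proof
  fix x assume "x \<in> mvars (p * q)"
  then obtain m where m: "m \<in> Poly_Mapping.keys (p * q)" "x \<in> Poly_Mapping.keys m" by (auto simp: mvars_def)
  then obtain a b where "a \<in> Poly_Mapping.keys p" "b \<in> Poly_Mapping.keys q" "m = a + b"
    using keys_mult[of p q] by blast
  then show "x \<in> mvars p \<union> mvars q" using m(2) keys_add[of a b] by (auto simp: mvars_def)
qed

lemma mvars_one: "mvars (1 :: ('w, 'k::comm_ring_1) mpoly) = {}"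
  by (simp add: mvars_def)

lemma mvars_mvar: "mvars (mvar x :: ('w, 'k::comm_ring_1) mpoly) = {x}"
  by (simp add: mvars_def mvar_def)

lemma mvars_prod: "mvars (\<Prod>i\<in>I. f i :: ('w, 'k::comm_ring_1) mpoly) \<subseteq> (\<Union>i\<in>I. mvars (f i))"
proof (induction I rule: infinite_finite_induct)
  case (insert x F)
  then show ?case using mvars_mult[of "f x" "prod f F"] by auto
qed (auto simp: mvars_one)

lemma homog_mvar: "homogeneous 1 (mvar v :: ('v, 'k::comm_ring_1) mpoly)"
  by (simp add: homogeneous_iff mvar_def mdeg_def)

lemma alpha_le:
  assumes "p \<in> J" "p \<noteq> 0" "homogeneous e p" shows "alpha J \<le> e"
  unfolding alpha_def by (rule Least_le) (use assms in blast)

lemma alpha_ge: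
  assumes "p \<in> J" "p \<noteq> 0" "homogeneous e p"
    and "\<And>e' p'. p' \<in> J \<Longrightarrow> p' \<noteq> 0 \<Longrightarrow> homogeneous e' p' \<Longrightarrow> c \<le> e'"
  shows "c \<le> alpha J"
proof -
  have "\<exists>p\<in>J. p \<noteq> 0 \<and> homogeneous (alpha J) p"
    unfolding alpha_def by (rule LeastI[of _ e]) (use assms in blast)
  then show ?thesis using assms(4) by blast
qed

lemma alpha_mono:
  assumes "J \<subseteq> J'" "p \<in> J" "p \<noteq> 0" "homogeneous e p"
  shows "alpha J' \<le> alpha J"
proof -
  have "\<exists>p\<in>J. p \<noteq> 0 \<and> homogeneous (alpha J) p"
    unfolding alpha_def by (rule LeastI[of _ e]) (use assms in blast)
  then obtain p' where "p' \<in> J'" "p' \<noteq> 0" "homogeneous (alpha J) p'" using assms(1) by blast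
  then show ?thesis by (rule alpha_le)
qed

lemma binom_step: "((e + Suc k) choose Suc k) + 1 \<le> ((Suc e + Suc k) choose Suc k)"
proof -
  have "(Suc e + Suc k) choose Suc k = ((e + Suc k) choose k) + ((e + Suc k) choose Suc k)"
    by simp
  moreover have "(e + Suc k) choose k \<ge> 1" by (simp add: Suc_leI)
  ultimately show ?thesis by simp
qed

lemma binom_ge: "((e + Suc k) choose Suc k) \<ge> e + 1"
proof (induction e)
  case 0 then show ?case by simp
next
  case (Suc e) then show ?case using binom_step[of e k] by simp
qed

lemma binom_mono: "e \<le> e' \<Longrightarrow> ((e + Suc k) choose Suc k) \<le> ((e' + Suc k) choose Suc k)"
proof (induction e' rule: dec_induct)
  case (step e') then show ?case using binom_step[of e' k] by simp
qed simp

lemma no_low_forms: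
  fixes a :: "nat \<Rightarrow> 'v::finite \<Rightarrow> 'k::field_char_0"
  assumes bij0: "bij_betw mo0 {0..<t} (Mon d)" and det: "det (evmat t mo0 a) \<noteq> 0"
    and tu: "t \<le> u" and p: "p \<in> points_ideal a u" "p \<noteq> 0" "homogeneous e p"
  shows "d + 1 \<le> e"
proof (rule ccontr)
  assume "\<not> d + 1 \<le> e"
  then have ed: "e \<le> d" by simp
  define v :: 'v where "v = undefined"
  define r where "r = p * mvar v ^ (d - e)"
  have "homogeneous ((d - e) * 1) (mvar v ^ (d - e) :: ('v, 'k) mpoly)"
    by (rule homog_power[OF homog_mvar])
  then have "homogeneous (e + (d - e)) r"
    using homog_mult[OF p(3)] by (simp add: r_def)
  with ed have hr: "homogeneous d r" by simp
  have van: "\<forall>i<t. peval r (a i) = 0"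
  proof (intro allI impI)
    fix i assume "i < t"
    then have "p \<in> point_ideal (a i)" using p(1) tu by (auto simp: points_ideal_def)
    then have "peval p (a i) = 0" by (rule point_ideal_vanish)
    then show "peval r (a i) = 0" by (simp add: r_def peval_mult)
  qed
  have "r = 0" by (rule kernel_trivial[OF bij0 det hr van])
  moreover have "r \<noteq> 0"
  proof -
    obtain x where "peval p x \<noteq> 0" using peval_nonzero_exists[OF p(2)] by blast
    moreover have "peval (mvar v ^ (d - e) :: ('v, 'k) mpoly) (\<lambda>_. 1) \<noteq> 0" by (simp add: peval_power)
    ultimately obtain y where "peval p y \<noteq> 0" "peval (mvar v ^ (d - e) :: ('v, 'k) mpoly) y \<noteq> 0"
      using two_nonzero by blast
    then have "peval r y \<noteq> 0" by (simp add: r_def peval_mult)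
    then show ?thesis by auto
  qed
  ultimately show False by simp
qed

lemma core:
  fixes a :: "nat \<Rightarrow> 'v::finite \<Rightarrow> 'k::field_char_0"
  assumes bij0: "bij_betw mo0 {0..<t} (Mon d)" and det: "det (evmat t mo0 a) \<noteq> 0"
    and ts: "t \<le> s" and sT: "s < card (Mon (d + 1) :: ('v \<Rightarrow>\<^sub>0 nat) set)"
    and nz: "\<forall>i<s. a i v0 \<noteq> 0"
    and W: "waldschmidt_prop f a t"
  shows "waldschmidt_prop f a s"
proof -
  obtain mo1 :: "nat \<Rightarrow> ('v \<Rightarrow>\<^sub>0 nat)" where bij1: "bij_betw mo1 {0..<card (Mon (d + 1) :: ('v \<Rightarrow>\<^sub>0 nat) set)} (Mon (d + 1))"
    using ex_bij_betw_nat_finite[OF finite_Mon] by blast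
  obtain q :: "('v, 'k) mpoly" where q: "q \<noteq> 0" "homogeneous (d + 1) q" "\<forall>i<s. peval q (a i) = 0"
    using kernel_nontrivial[OF bij1 sT] by blast
  have qI: "q \<in> point_ideal (a i)" if "i < s" for i
    using point_ideal_member[of "a i" v0 "d + 1" q] nz q that by blast
  have alpha_eq: "alpha (points_ideal a u) = d + 1" if "t \<le> u" "u \<le> s" for u
  proof (rule antisym)
    have "q \<in> points_ideal a u" using qI that by (auto simp: points_ideal_def)
    then show "alpha (points_ideal a u) \<le> d + 1" using q by (intro alpha_le) auto
    show "d + 1 \<le> alpha (points_ideal a u)"
      using \<open>q \<in> points_ideal a u\<close> q(1,2)
      by (rule alpha_ge) (rule no_low_forms[OF bij0 det \<open>t \<le> u\<close>])
  qed
  show ?thesis unfolding waldschmidt_prop_def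
  proof (intro allI impI)
    fix m :: nat assume m: "m \<ge> 1"
    have sub: "symbolic_power a s m \<subseteq> symbolic_power a t m"
      using ts by (auto simp: symbolic_power_def)
    have qm: "q ^ m \<in> symbolic_power a s m"
      using qI by (auto simp: symbolic_power_def intro: ideal_pow_power)
    have qm0: "q ^ m \<noteq> 0"
    proof -
      obtain x where "peval q x \<noteq> 0" using peval_nonzero_exists[OF q(1)] by blast
      then have "peval (q ^ m) x \<noteq> 0" by (simp add: peval_power)
      then show ?thesis by auto
    qed
    have le: "alpha (symbolic_power a t m) \<le> alpha (symbolic_power a s m)"
      by (rule alpha_mono[OF sub qm qm0 homog_power[OF q(2)]])
    have "f (alpha (points_ideal a s)) = f (alpha (points_ideal a t))"
      using alpha_eq[of s] alpha_eq[of t] ts by simp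
    also have "\<dots> \<le> of_nat (alpha (symbolic_power a t m)) / of_nat m"
      using W m by (simp add: waldschmidt_prop_def)
    also have "\<dots> \<le> of_nat (alpha (symbolic_power a s m)) / of_nat m"
      using le by (simp add: divide_right_mono)
    finally show "f (alpha (points_ideal a s)) \<le> of_nat (alpha (symbolic_power a s m)) / of_nat m" .
  qed
qed


theorem lemma5p6:
  fixes f :: "nat \<Rightarrow> rat"
  assumes N: "card (UNIV :: 'v::finite set) \<ge> 3"
  assumes H: "\<forall>d. general_points ((d + (card (UNIV :: 'v set) - 1)) choose (card (UNIV :: 'v set) - 1))
                  (\<lambda>a :: nat \<Rightarrow> 'v \<Rightarrow> 'k::field_char_0.
                     waldschmidt_prop f a ((d + (card (UNIV :: 'v set) - 1)) choose (card (UNIV :: 'v set) - 1)))"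
  shows "\<forall>s\<ge>1. general_points s (\<lambda>a :: nat \<Rightarrow> 'v \<Rightarrow> 'k. waldschmidt_prop f a s)"
proof (intro allI impI)
  fix s :: nat assume s1: "s \<ge> 1"
  define N where "N = card (UNIV :: 'v set) - 1"
  define k where "k = N - 1"
  have Nk: "N = Suc k" using N by (simp add: N_def k_def)
  define B where "B e = (e + N) choose N" for e
  have B_card: "card (Mon e :: ('v \<Rightarrow>\<^sub>0 nat) set) = B e" for e
    unfolding B_def N_def by (rule card_Mon') (use N in simp)
  have Bge: "B e \<ge> e + 1" for e using binom_ge[of e k] by (simp add: B_def Nk)
  have B0: "B 0 = 1" by (simp add: B_def)
  define d where "d = (LEAST e. s < B (e + 1))"
  have ex: "s < B (s + 1)" using Bge[of "s + 1"] by simp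
  have sT: "s < B (d + 1)" unfolding d_def by (rule LeastI[of _ s]) (rule ex)
  have ts: "B d \<le> s"
  proof (cases d)
    case 0 then show ?thesis using B0 s1 by simp
  next
    case (Suc d')
    then have "d' < d" by simp
    then have "\<not> s < B (d' + 1)" unfolding d_def by (rule not_less_Least)
    then show ?thesis using Suc by simp
  qed
  define t where "t = B d"
  have "general_points t (\<lambda>a :: nat \<Rightarrow> 'v \<Rightarrow> 'k. waldschmidt_prop f a t)"
    using H by (simp add: t_def B_def N_def)
  then obtain S0 :: "(nat \<times> 'v, 'k) mpoly set" where
      S0v: "\<forall>h\<in>S0. mvars h \<subseteq> {..<t} \<times> UNIV" and
      S0ne: "\<exists>a. \<exists>h\<in>S0. peval h (case_prod a) \<noteq> 0" and
      S0P: "\<forall>a. (\<exists>h\<in>S0. peval h (case_prod a) \<noteq> 0) \<longrightarrow> waldschmidt_prop f a t"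
    unfolding general_points_def by blast
  have fin: "finite (Mon d :: ('v \<Rightarrow>\<^sub>0 nat) set)" by (rule finite_Mon)
  from ex_bij_betw_nat_finite[OF fin] obtain mo0 :: "nat \<Rightarrow> ('v \<Rightarrow>\<^sub>0 nat)"
    where "bij_betw mo0 {0..<card (Mon d :: ('v \<Rightarrow>\<^sub>0 nat) set)} (Mon d)" by blast
  then have bij0: "bij_betw mo0 {0..<t} (Mon d)" by (simp only: B_card t_def)
  have inj0: "inj_on mo0 {0..<t}" using bij0 by (simp add: bij_betw_def)
  obtain a1 :: "nat \<Rightarrow> 'v \<Rightarrow> 'k" where a1: "det (evmat t mo0 a1) \<noteq> 0"
    using exists_good_points[OF inj0] by blast
  define v0 :: 'v where "v0 = undefined"
  define Z :: "(nat \<times> 'v, 'k) mpoly" where "Z = (\<Prod>i\<in>{..<s}. mvar (i, v0))"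
  define D :: "(nat \<times> 'v, 'k) mpoly" where "D = Dpoly t mo0"
  define S where "S = (\<lambda>h. h * (D * Z)) ` S0"
  have pZ: "peval Z x = (\<Prod>i\<in>{..<s}. x (i, v0))" for x
    by (simp add: Z_def peval_prod)
  have pD: "peval D (case_prod a) = det (evmat t mo0 a)" for a
    by (simp add: D_def peval_Dpoly)
  show "general_points s (\<lambda>a :: nat \<Rightarrow> 'v \<Rightarrow> 'k. waldschmidt_prop f a s)"
    unfolding general_points_def
  proof (intro exI[of _ S] conjI)
    show "\<forall>h\<in>S. mvars h \<subseteq> {..<s} \<times> UNIV"
    proof
      fix h assume "h \<in> S"
      then obtain h0 where h0: "h0 \<in> S0" "h = h0 * (D * Z)" by (auto simp: S_def)
      have "mvars h \<subseteq> mvars h0 \<union> (mvars D \<union> mvars Z)"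
        using mvars_mult[of h0 "D * Z"] mvars_mult[of D Z] h0(2) by blast
      moreover have "mvars h0 \<subseteq> {..<s} \<times> UNIV" using S0v h0(1) ts by (fastforce simp: t_def)
      moreover have "mvars D \<subseteq> {..<s} \<times> UNIV" using mvars_Dpoly[of t mo0] ts by (fastforce simp: D_def t_def)
      moreover have "mvars Z \<subseteq> {..<s} \<times> UNIV"
        using mvars_prod[of "\<lambda>i. mvar (i, v0) :: (nat \<times> 'v, 'k) mpoly" "{..<s}"] by (auto simp: Z_def mvars_mvar)
      ultimately show "mvars h \<subseteq> {..<s} \<times> UNIV" by blast
    qed
  next
    obtain a0 h0 where h0: "h0 \<in> S0" "peval h0 (case_prod a0) \<noteq> 0" using S0ne by blast
    have "peval D (case_prod a1) \<noteq> 0" using a1 pD by simp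
    moreover have "peval Z (\<lambda>_. 1) \<noteq> 0" by (simp add: pZ)
    ultimately obtain x1 where "peval D x1 \<noteq> 0" "peval Z x1 \<noteq> 0" using two_nonzero by blast
    then have "peval (D * Z) x1 \<noteq> 0" by (simp add: peval_mult)
    then obtain x2 where x2: "peval h0 x2 \<noteq> 0" "peval (D * Z) x2 \<noteq> 0" using two_nonzero h0(2) by blast
    have "x2 = case_prod (\<lambda>i v. x2 (i, v))" by simp
    then have "peval (h0 * (D * Z)) (case_prod (\<lambda>i v. x2 (i, v))) \<noteq> 0"
      using x2 by (metis peval_mult mult_eq_0_iff)
    moreover have "h0 * (D * Z) \<in> S" using h0(1) by (simp add: S_def)
    ultimately show "\<exists>a. \<exists>h\<in>S. peval h (case_prod a) \<noteq> 0" by blast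
  next
    show "\<forall>a. (\<exists>h\<in>S. peval h (case_prod a) \<noteq> 0) \<longrightarrow> waldschmidt_prop f a s"
    proof (intro allI impI)
      fix a :: "nat \<Rightarrow> 'v \<Rightarrow> 'k" assume "\<exists>h\<in>S. peval h (case_prod a) \<noteq> 0"
      then obtain h0 where h0: "h0 \<in> S0" "peval (h0 * (D * Z)) (case_prod a) \<noteq> 0" by (auto simp: S_def)
      then have n1: "peval h0 (case_prod a) \<noteq> 0" and n2: "peval D (case_prod a) \<noteq> 0"
        and n3: "peval Z (case_prod a) \<noteq> 0" by (auto simp: peval_mult)
      have W: "waldschmidt_prop f a t" using S0P n1 h0(1) by blast
      have det: "det (evmat t mo0 a) \<noteq> 0" using n2 pD by simp
      have nz: "\<forall>i<s. a i v0 \<noteq> 0" using n3 by (simp add: pZ)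
      show "waldschmidt_prop f a s"
        by (rule core[OF bij0 det _ _ nz W]) (use ts sT B_card in \<open>simp_all add: t_def\<close>)
    qed
  qed
qed

end
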